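(* Let $E_k[1/k]=\sum_k g(k)/k$. (i) Under Public WOM, with $p_2=1/2$ and cutoff $\underline{k}=k_{f\min}$ (so that all informed consumers pass on the information, $L=1$, $\Gamma=1$, and the bonus is $b=c/(k_{f\min}\phi(1,1/2))$), the seller's profit $(1-\beta)+\beta\,(p_2-b)(1-p_2)\Gamma$ is positive if and only if $E_k[1/k]>\frac{4\beta}{4-3\beta}\cdot\frac{c}{k_{f\min}}$. (ii) Under Private WOM, with $p_2=1/2$ and $L=1$ (bonus $b_{pr}=c_{pr}/\phi(1,1/2)$), the seller's profit is positive whenever $E_k[1/k]>\frac{4\beta}{4-3\beta}\,c_{pr}$.
   Context: A seller (zero marginal cost) faces a unit mass of unit-demand consumers: a fraction $1-\beta\in(0,1)$ informed with reservation value 1 (charged $p_1=1$), and a fraction $\beta$ uninformed with reservation value $v\sim U[0,1]$ (charged $p_2$). Informed consumers are linked to uninformed ones by a directed bipartite network with out-degree distribution $f$ (informed) and in-degree distribution $g$ (uninformed) on the positive integers, with $(1-\beta)\sum_k kf(k)=\beta\sum_k kg(k)$; $k_{f\min}$ is the smallest degree in the support of $f$. With a fraction $L$ of active links, $\Gamma(L)=1-\sum_k g(k)(1-L)^k$ and $\phi(L,p_2)=(1-p_2)\sum_k g(k)\frac{1-(1-L)^k}{kL}$ (so $\phi(1,1/2)=E_k[1/k]/2$). Profit with per-referral bonus $b$ is $(1-\beta)+\beta(p_2-b)(1-p_2)\Gamma(L)$. Public WOM: an informed consumer of out-degree $k$ informs all out-neighbours at lump-sum cost $c>0$ iff $kb\phi(L,p_2)\ge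 c$; cutoff $\underline{k}$ gives $L=\sum_{k\ge\underline{k}}f(k)$ and is implemented by $b=c/(\underline{k}\phi(L,p_2))$. Private WOM: each contact costs $c_{pr}>0$, and a bonus $b_{pr}$ induces fraction $L$ of active links with $\phi(L,p_2)b_{pr}=c_{pr}$. *)

theory Defs
  imports Complex_Main
begin

definition degree_dist :: "(nat \<Rightarrow> real) \<Rightarrow> bool" where
  "degree_dist f \<longleftrightarrow> (\<forall>k. 0 \<le> f k) \<and> f 0 = 0 \<and> f sums 1"

definition kmin :: "(nat \<Rightarrow> real) \<Rightarrow> nat" where
  "kmin f = (LEAST k. 0 < f k)"

definition Einv :: "(nat \<Rightarrow> real) \<Rightarrow> real" where
  "Einv g = (\<Sum>k. g k / real k)"

definition Gamma :: "(nat \<Rightarrow> real) \<Rightarrow> real \<Rightarrow> real" where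
  "Gamma g L = 1 - (\<Sum>k. g k * (1 - L) ^ k)"

definition phi :: "(nat \<Rightarrow> real) \<Rightarrow> real \<Rightarrow> real \<Rightarrow> real" where
  "phi g L p2 = (1 - p2) * (\<Sum>k. g k * (1 - (1 - L) ^ k) / (real k * L))"

text \<open>Fraction of active links under public WOM with cutoff kc.\<close>
definition L_pub :: "(nat \<Rightarrow> real) \<Rightarrow> nat \<Rightarrow> real" where
  "L_pub f kc = (\<Sum>k. if kc \<le> k then f k else 0)"

definition profit :: "real \<Rightarrow> real \<Rightarrow> real \<Rightarrow> real \<Rightarrow> real" where
  "profit \<beta> p2 b \<Gamma> = (1 - \<beta>) + \<beta> * (p2 - b) * (1 - p2) * \<Gamma>"

end

theory Submission
  imports Defs
begin

lemma key:
  fixes \<beta> E K c :: real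
  assumes "0 < \<beta>" "\<beta> < 1" "0 < E" "1 \<le> K" "0 < c"
  shows "profit \<beta> (1/2) (c / (K * (E/2))) 1 > 0 \<longleftrightarrow> E > 4 * \<beta> / (4 - 3 * \<beta>) * (c / K)"
proof -
  have p: "profit \<beta> (1/2) (c / (K * (E/2))) 1 = ((4 - 3*\<beta>) * K * E - 4*\<beta>*c) / (4*K*E)"
    using assms by (simp add: profit_def field_simps)
  have "4 * \<beta> / (4 - 3 * \<beta>) * (c / K) = (4*\<beta>*c) / ((4 - 3*\<beta>) * K)" by simp
  moreover have "E > (4*\<beta>*c) / ((4 - 3*\<beta>) * K) \<longleftrightarrow> (4 - 3*\<beta>) * K * E - 4*\<beta>*c > 0"
    using assms by (simp add: pos_divide_less_eq mult.commute mult.left_commute)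
  moreover have "((4 - 3*\<beta>) * K * E - 4*\<beta>*c) / (4*K*E) > 0 \<longleftrightarrow> (4 - 3*\<beta>) * K * E - 4*\<beta>*c > 0"
  proof -
    have "\<not> E*K < 0" using assms mult_pos_pos[of E K] by linarith
    then show ?thesis using assms by (auto simp: zero_less_divide_iff)
  qed
  ultimately show ?thesis using p by simp
qed

theorem corollary1:
  fixes f g :: "nat \<Rightarrow> real" and \<beta> c c_pr :: real
  assumes beta: "0 < \<beta>" "\<beta> < 1"
    and f: "degree_dist f" and g: "degree_dist g"
    and fmean: "summable (\<lambda>k. real k * f k)" and gmean: "summable (\<lambda>k. real k * g k)"
    and balance: "(1 - \<beta>) * (\<Sum>k. real k * f k) = \<beta> * (\<Sum>k. real k * g k)"
    and c: "0 < c" and cpr: "0 < c_pr"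
  shows
   "(let L = L_pub f (kmin f);
         b = c / (real (kmin f) * phi g L (1/2))
     in profit \<beta> (1/2) b (Gamma g L) > 0
        \<longleftrightarrow> Einv g > 4 * \<beta> / (4 - 3 * \<beta>) * (c / real (kmin f)))
    \<and>
    (let b_pr = c_pr / phi g 1 (1/2)
     in Einv g > 4 * \<beta> / (4 - 3 * \<beta>) * c_pr \<longrightarrow> profit \<beta> (1/2) b_pr (Gamma g 1) > 0)"
proof -
  have fn: "\<And>k. 0 \<le> f k" "f 0 = 0" "f sums 1" using f by (auto simp: degree_dist_def)
  have gn: "\<And>k. 0 \<le> g k" "g 0 = 0" "g sums 1" using g by (auto simp: degree_dist_def)
  have "\<exists>k. 0 < f k"
  proof (rule ccontr)
    assume "\<not> ?thesis"
    then have "\<And>k. f k = 0" using fn(1) by (metis not_less order.antisym)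
    then have "f = (\<lambda>k. 0)" by auto
    then show False using fn(3) by (metis sums_zero sums_unique2 zero_neq_one)
  qed
  then obtain k0 where k0: "0 < f k0" by blast
  have Kpos: "0 < f (kmin f)" unfolding kmin_def using k0 by (rule LeastI)
  have K1: "1 \<le> kmin f" using Kpos fn(2) by (cases "kmin f") auto
  have below: "\<And>k. k < kmin f \<Longrightarrow> f k = 0"
    unfolding kmin_def using not_less_Least fn(1) by (metis less_eq_real_def)
  have L1: "L_pub f (kmin f) = 1"
  proof -
    have "(\<lambda>k. if kmin f \<le> k then f k else 0) = f"
      using below by (auto simp: fun_eq_iff)
    then show ?thesis unfolding L_pub_def using fn(3) sums_unique by fastforce
  qed
  have "\<exists>k. 0 < g k"
  proof (rule ccontr)
    assume "\<not> ?thesis"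
    then have "\<And>k. g k = 0" using gn(1) by (metis not_less order.antisym)
    then have "g = (\<lambda>k. 0)" by auto
    then show False using gn(3) by (metis sums_zero sums_unique2 zero_neq_one)
  qed
  then obtain j where j: "0 < g j" by blast
  have j1: "j \<noteq> 0" using j gn(2) by (metis less_irrefl)
  have sg: "summable (\<lambda>k. g k / real k)"
  proof (rule summable_comparison_test)
    show "\<exists>N. \<forall>n\<ge>N. norm (g n / real n) \<le> g n"
    proof (intro exI[of _ 1] allI impI)
      fix n :: nat assume "1 \<le> n"
      then have "g n * 1 \<le> g n * real n" using gn(1)[of n] by (intro mult_left_mono) auto
      then show "norm (g n / real n) \<le> g n" using gn(1)[of n] \<open>1 \<le> n\<close> by (simp add: divide_le_eq)
    qed
    show "summable g" using gn(3) by (rule sums_summable)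
  qed
  have Epos: "0 < Einv g" unfolding Einv_def
    by (rule suminf_pos2[OF sg, of j]) (use gn(1) j j1 in auto)
  have G1: "Gamma g 1 = 1"
  proof -
    have "(\<lambda>k. g k * (1 - 1) ^ k) = (\<lambda>k. 0::real)"
      using gn(2) by (auto simp: fun_eq_iff power_0_left)
    then show ?thesis unfolding Gamma_def by simp
  qed
  have P1: "phi g 1 (1/2) = Einv g / 2"
  proof -
    have "(\<lambda>k. g k * (1 - (1 - 1) ^ k) / (real k * 1)) = (\<lambda>k. g k / real k)"
      using gn(2) by (auto simp: fun_eq_iff power_0_left)
    then show ?thesis unfolding phi_def Einv_def by simp
  qed
  have A: "profit \<beta> (1/2) (c / (real (kmin f) * (Einv g/2))) 1 > 0
        \<longleftrightarrow> Einv g > 4 * \<beta> / (4 - 3 * \<beta>) * (c / real (kmin f))"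
    by (rule key) (use beta Epos K1 c in auto)
  have B: "profit \<beta> (1/2) (c_pr / (1 * (Einv g/2))) 1 > 0
        \<longleftrightarrow> Einv g > 4 * \<beta> / (4 - 3 * \<beta>) * (c_pr / 1)"
    by (rule key) (use beta Epos cpr in auto)
  show ?thesis using A B by (simp add: L1 G1 P1 Let_def)
qed

end
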